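(* For every integer $n\ge1$, $$\mathrm{He}_{(n,n)}(0)=\begin{cases}\dfrac{(n!)^2}{2^{n-1}\left(\frac{n-1}{2}\right)!^2}, & n\text{ odd},\\[2mm] (n+1)\dfrac{(n!)^2}{2^{n}\left(\frac{n}{2}\right)!^2}, & n\text{ even}.\end{cases}$$ In particular, $\mathrm{He}_{(n,n)}(0)$ is a perfect square $r^2$ ($r\ge1$ an integer) when $n$ is odd, and is of the form $(n+1)r^2$ with $r\ge1$ an integer when $n$ is even.
   Context: $\mathrm{He}_k(x)$ denotes the monic probabilists' Hermite polynomial of degree $k$. For a partition $\lambda=(\lambda_1\ge\dots\ge\lambda_r\ge0)$ the degree sequence is $n_\lambda=(\lambda_r,\lambda_{r-1}+1,\dots,\lambda_1+r-1)$, and $\mathrm{He}_\lambda(x)=\mathrm{Wr}[\mathrm{He}_{n_1},\dots,\mathrm{He}_{n_r}]/\prod_{i<j}(n_j-n_i)$ where $n_\lambda=(n_1,\dots,n_r)$. Thus $\mathrm{He}_{(n,n)}=\mathrm{Wr}[\mathrm{He}_n,\mathrm{He}_{n+1}]$. *)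

theory Defs
  imports "HOL-Computational_Algebra.Polynomial"
begin

fun hermite_He :: "nat \<Rightarrow> real poly" where
  "hermite_He 0 = 1"
| "hermite_He (Suc 0) = [:0, 1:]"
| "hermite_He (Suc (Suc k)) = [:0, 1:] * hermite_He (Suc k) - smult (real (Suc k)) (hermite_He k)"

definition wronskian2 :: "real poly \<Rightarrow> real poly \<Rightarrow> real poly" where
  "wronskian2 p q = p * pderiv q - pderiv p * q"

text \<open>He_(n,n) = Wr[He_n, He_(n+1)] (degree sequence (n, n+1), normalising constant 1).\<close>
definition He_nn :: "nat \<Rightarrow> real poly" where
  "He_nn n = wronskian2 (hermite_He n) (hermite_He (Suc n))"

end

theory Submission imports Defs begin

lemma smult2: "smult (2::real) p = 2 * p"
proof -
  have "smult 2 p = p + p" using smult_add_left[of 1 1 p] by simp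
  then show ?thesis by (metis mult_2)
qed

lemma He_deriv: "pderiv (hermite_He (Suc k)) = smult (real (Suc k)) (hermite_He k)"
proof (induction k rule: less_induct)
  case (less k)
  show ?case
  proof (cases k)
    case 0 then show ?thesis by (simp add: pderiv_pCons)
  next
    case (Suc j)
    show ?thesis
    proof (cases j)
      case 0 then show ?thesis using Suc
        by (simp add: pderiv_pCons pderiv_mult numeral_2_eq_2 one_pCons algebra_simps)
    next
      case (Suc i)
      have IH1: "pderiv (hermite_He (Suc j)) = smult (real (Suc j)) (hermite_He j)"
        using less \<open>k = Suc j\<close> by simp
      have IH2: "pderiv (hermite_He (Suc i)) = smult (real (Suc i)) (hermite_He i)"
        using less \<open>k = Suc j\<close> Suc by simp
      have "pderiv (hermite_He (Suc k)) = hermite_He (Suc j) + [:0,1:] * smult (real (Suc j)) (hermite_He j)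
           - smult (real (Suc j)) (pderiv (hermite_He j))"
        using \<open>k = Suc j\<close> IH1 by (simp add: pderiv_mult pderiv_diff pderiv_smult pderiv_pCons)
      also have "\<dots> = hermite_He (Suc j) + smult (real (Suc j)) (hermite_He (Suc j))"
        using IH2 Suc by (simp add: algebra_simps smult_add_right smult_diff_right)
      also have "\<dots> = smult (1 + real (Suc j)) (hermite_He (Suc j))"
        by (simp add: smult_add_left smult2)
      finally show ?thesis using \<open>k = Suc j\<close> by (simp add: add.commute smult2)
    qed
  qed
qed

fun df :: "nat \<Rightarrow> nat" where
  "df 0 = 1" | "df (Suc m) = (2*m+1) * df m"

lemma He_rec0: "poly (hermite_He (Suc (Suc k))) 0 = - real (Suc k) * poly (hermite_He k) 0"
  by (simp add: algebra_simps)

lemma He0_vals: "poly (hermite_He (2*m)) 0 = (-1)^m * real (df m) \<and> poly (hermite_He (2*m+1)) 0 = 0"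
proof (induction m)
  case 0 then show ?case by simp
next
  case (Suc m)
  have e1: "2 * Suc m = Suc (Suc (2*m))" by simp
  have e2: "2 * Suc m + 1 = Suc (Suc (2*m+1))" by simp
  show ?case using Suc unfolding e1 e2 He_rec0 by (simp add: algebra_simps)
qed

lemma df_pos: "df m \<ge> 1" by (induction m) auto

lemma df_fact: "real (df m) = fact (2*m) / (2^m * fact m)"
proof (induction m)
  case 0 then show ?case by simp
next
  case (Suc m)
  have e: "2 * Suc m = Suc (Suc (2*m))" by simp
  have "fact (2 * Suc m) / (2^Suc m * fact (Suc m)) = (2*real m+1) * (fact (2*m) / (2^m * fact m) :: real)"
  proof -
    have a: "fact (2 * Suc m) = (2*real m+2)*((2*real m+1)*fact(2*m))" unfolding e
      by (simp add: algebra_simps)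
    have b: "2^Suc m*fact(Suc m) = (2*real m+2) * (2^m * fact m)"
      by (simp add: algebra_simps)
    have c: "2*real m+2 \<noteq> 0" by simp
    show ?thesis unfolding a b using c by (metis c mult_divide_mult_cancel_left times_divide_eq_right)
  qed
  moreover have "real (df (Suc m)) = (2*real m+1) * real (df m)" by (simp add: algebra_simps)
  ultimately show ?case using Suc by simp
qed

lemma Wr0: "n \<ge> 1 \<Longrightarrow> poly (He_nn n) 0 =
   real (n+1) * (poly (hermite_He n) 0)^2 - real n * poly (hermite_He (n-1)) 0 * poly (hermite_He (Suc n)) 0"
  by (cases n) (simp_all del: hermite_He.simps(3) add: He_nn_def wronskian2_def He_deriv power2_eq_square algebra_simps)


lemma sgn1: "(-1::real)^m * (-1)^(Suc m) = -1"
proof -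
  have "(-1::real)^m * (-1)^(Suc m) = (-1)^(2*m+1)" by (simp add: power_add flip: power_mult_distrib mult_2)
  also have "\<dots> = -1" by simp
  finally show ?thesis .
qed

lemma sgn2: "((-1::real)^m)^2 = 1"
  by (simp flip: power_mult)

theorem mainTheorem12:
  fixes n :: nat
  assumes "n \<ge> 1"
  shows "poly (He_nn n) 0 =
           (if odd n
            then (fact n)^2 / (2 ^ (n - 1) * (fact ((n - 1) div 2))^2)
            else real (n + 1) * (fact n)^2 / (2 ^ n * (fact (n div 2))^2))
         \<and> (odd n \<longrightarrow> (\<exists>r::nat. r \<ge> 1 \<and> poly (He_nn n) 0 = real (r^2)))
         \<and> (even n \<longrightarrow> (\<exists>r::nat. r \<ge> 1 \<and> poly (He_nn n) 0 = real ((n + 1) * r^2)))"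
proof (cases "odd n")
  case True
  then obtain m where n: "n = 2*m+1" using oddE by blast
  have W: "poly (He_nn n) 0 = real (df (Suc m))^2"
  proof -
    have a: "poly (hermite_He n) 0 = 0" using He0_vals[of m] n by simp
    have b: "poly (hermite_He (n-1)) 0 = (-1)^m * real (df m)" using He0_vals[of m] n by simp
    have c: "poly (hermite_He (Suc n)) 0 = (-1)^(Suc m) * real (df (Suc m))"
      using He0_vals[of "Suc m"] n by (simp del: hermite_He.simps power.simps)
    have "poly (He_nn n) 0 = - (real n * real (df m)) * real (df (Suc m)) * ((-1)^m * (-1)^(Suc m))"
      using Wr0[OF assms] a b c by (simp del: hermite_He.simps power.simps add: algebra_simps)
    also have "\<dots> = real n * real (df m) * real (df (Suc m))" by (simp only: sgn1) simp
    also have "real n * real (df m) = real (df (Suc m))" by (simp add: n algebra_simps)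
    finally show ?thesis by (simp add: power2_eq_square)
  qed
  have F: "real (df (Suc m)) = fact n / (2^m * fact m)"
  proof -
    have "real (df (Suc m)) = (2*real m+1) * real (df m)" by (simp add: algebra_simps)
    also have "\<dots> = (2*real m+1) * (fact (2*m) / (2^m * fact m))" by (simp only: df_fact)
    also have "\<dots> = fact n / (2^m * fact m)" by (simp add: n algebra_simps)
    finally show ?thesis .
  qed
  have e1: "n - 1 = 2*m" "(n - 1) div 2 = m" using n by auto
  have "(fact n / (2^m * fact m))^2 = (fact n)^2 / (2 ^ (n - 1) * (fact ((n - 1) div 2))^2 :: real)"
    unfolding e1 by (simp add: power_divide power_mult_distrib power_mult mult.commute)
  then show ?thesis using True W F df_pos[of "Suc m"] by (metis of_nat_power)
next
  case False
  then obtain m where n: "n = 2*m" using evenE by blast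
  have W: "poly (He_nn n) 0 = real ((n+1) * df m^2)"
  proof -
    have a: "poly (hermite_He n) 0 = (-1)^m * real (df m)" using He0_vals[of m] n by simp
    have b: "poly (hermite_He (Suc n)) 0 = 0" using He0_vals[of m] n by simp
    have "poly (He_nn n) 0 = real (n+1) * ((-1)^m * real (df m))^2"
      using Wr0[OF assms] a b by simp
    also have "\<dots> = real (n+1) * ((-1)^m)^2 * real (df m)^2" by (simp only: power_mult_distrib mult.assoc)
    also have "\<dots> = real ((n+1) * df m^2)" by (simp only: sgn2) (simp add: algebra_simps)
    finally show ?thesis .
  qed
  have e1: "n div 2 = m" using n by auto
  have "real ((n+1) * df m^2) = real (n + 1) * (fact n)^2 / (2 ^ n * (fact (n div 2))^2)"
  proof -
    have "real ((n+1) * df m^2) = real (n+1) * real (df m)^2" by (simp add: algebra_simps)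
    also have "\<dots> = real (n+1) * (fact n / (2^m * fact m))^2" by (simp only: df_fact n)
    also have "\<dots> = real (n + 1) * (fact n)^2 / (2 ^ n * (fact (n div 2))^2)"
      unfolding e1 by (simp add: n power_divide power_mult_distrib power_mult mult.commute)
    finally show ?thesis .
  qed
  then show ?thesis using False W df_pos[of m] by auto
qed

end
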